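(* Let $f:\mathcal{X}\to\Delta^{k-1}$ be a classifier outputting confidence vectors. Let $P_S$ and $P_T$ be source and target distributions over $\mathcal{X}\times\mathcal{Y}$ with $k$ classes, and write $P_S(y)$, $P_T(y)$ for the source and target label distributions, viewed as distributions over one-hot vectors $\{0,1\}^k\cap\Delta^{k-1}$. Let $f_\# P_T(c)$ be the distribution of $f(x)$ for $x\sim P_T(x)$, and let $P_{\mathrm{pseudo}}(y)$ be the distribution of the one-hot vector $e_{\arg\max_j f_j(x)}$ for $x\sim P_T(x)$. Define $\hat\epsilon_{\mathrm{COT}}=W_\infty\bigl(f_\# P_T(c),P_S(y)\bigr)$. If $P_T(y)=P_S(y)$, then $$\hat\epsilon_{\mathrm{COT}}\ \ge\ 0.5\,W_\infty\bigl(P_{\mathrm{pseudo}}(y),P_T(y)\bigr).$$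
   Context: $\Delta^{k-1}=\{c\in\mathbb{R}^k: c_j\ge 0,\ \sum_j c_j=1\}$; $e_i$ is the $i$-th standard basis vector. For probability distributions $P,Q$ on $\mathbb{R}^k$, $W_\infty(P,Q)=\inf_{\pi\in\Pi(P,Q)}\int\|u-v\|_\infty\,d\pi(u,v)$ over couplings $\pi$ of $P$ and $Q$ (optimal transport distance with ground cost $\|u-v\|_\infty$). Ties in $\arg\max$ are broken by a fixed rule (e.g. smallest index). *)

theory Defs
  imports "HOL-Probability.Probability"
begin

text \<open>Vectors in R^k are represented as real^'k, with the finite linearly ordered
  type 'k serving as the class index set {1..k}.\<close>

definition prob_simplex :: "(real ^ 'k::finite) set" where
  "prob_simplex = {c. (\<forall>j. c $ j \<ge> 0) \<and> (\<Sum>j\<in>UNIV. c $ j) = 1}"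

definition onehot :: "'k::finite \<Rightarrow> real ^ 'k" where
  "onehot i = (\<chi> j. if j = i then 1 else 0)"

definition linf_dist :: "real ^ 'k::finite \<Rightarrow> real ^ 'k \<Rightarrow> real" where
  "linf_dist u v = Max (range (\<lambda>j. \<bar>u $ j - v $ j\<bar>))"

definition argmax_idx :: "real ^ 'k::{finite,linorder} \<Rightarrow> 'k" where
  "argmax_idx c = (LEAST j. \<forall>i. c $ i \<le> c $ j)"

definition couplings :: "'a::topological_space measure \<Rightarrow> 'b::topological_space measure \<Rightarrow> ('a \<times> 'b) measure set" where
  "couplings P Q = {\<pi>. prob_space \<pi> \<and> sets \<pi> = sets (borel :: ('a \<times> 'b) measure)
      \<and> distr \<pi> borel fst = P \<and> distr \<pi> borel snd = Q}"

definition W_inf :: "(real ^ 'k::finite) measure \<Rightarrow> (real ^ 'k) measure \<Rightarrow> ennreal" where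
  "W_inf P Q = (INF \<pi>\<in>couplings P Q. \<integral>\<^sup>+ z. ennreal (linf_dist (fst z) (snd z)) \<partial>\<pi>)"

definition label_dist :: "('x \<times> 'k::finite) measure \<Rightarrow> (real ^ 'k) measure" where
  "label_dist P = distr P borel (\<lambda>p. onehot (snd p))"

definition push_conf :: "('x \<Rightarrow> real ^ 'k::finite) \<Rightarrow> ('x \<times> 'k) measure \<Rightarrow> (real ^ 'k) measure" where
  "push_conf f P = distr P borel (\<lambda>p. f (fst p))"

definition pseudo_dist
  where "pseudo_dist f P = distr P borel (\<lambda>p. onehot (argmax_idx (f (fst p))))"

end

theory Submission imports Defs begin

lemma nth_meas[measurable]: "(\<lambda>x::real^'k::finite. x $ i) \<in> borel_measurable borel"
  by (intro borel_measurable_continuous_onI continuous_on_component continuous_on_id)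

lemma nth_meas'[measurable (raw)]: "f \<in> borel_measurable M \<Longrightarrow> (\<lambda>x. (f x :: real^'k::finite) $ i) \<in> borel_measurable M"
  using measurable_comp[OF _ nth_meas] by (auto simp: o_def)

lemma linf_meas: "(\<lambda>z::(real^'k::finite) \<times> (real^'k). linf_dist (fst z) (snd z)) \<in> borel_measurable borel"
proof -
  have "(\<lambda>z::(real^'k::finite) \<times> (real^'k). linf_dist (fst z) (snd z)) \<in> borel_measurable (borel \<Otimes>\<^sub>M borel)"
    unfolding linf_dist_def
    by (rule borel_measurable_Max[where I=UNIV, simplified], simp, measurable)
  then show ?thesis by (simp add: borel_prod)
qed

lemma linf_nonneg: "0 \<le> linf_dist u v"
  unfolding linf_dist_def by (rule order_trans[OF abs_ge_zero Max_ge[of _ "\<bar>u $ undefined - v $ undefined\<bar>"]]) auto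

lemma argmax_ex: "\<exists>j. \<forall>i. (c::real^'k::finite) $ i \<le> c $ j"
proof -
  have "finite (range (\<lambda>i. c $ i))" by simp
  then obtain j where "c $ j = Max (range (\<lambda>i. c $ i))"
    by (metis (mono_tags, lifting) Max_in UNIV_not_empty empty_is_image imageE)
  then show ?thesis by (metis Max_ge \<open>finite _\<close> rangeI)
qed

lemma least_fin:
  fixes P :: "'k::{finite,linorder} \<Rightarrow> bool"
  assumes "P x"
  shows "P (Least P) \<and> (\<forall>y. P y \<longrightarrow> Least P \<le> y)"
proof -
  let ?S = "{j. P j}"
  have fin: "finite ?S" "?S \<noteq> {}" using assms by auto
  have m: "P (Min ?S)" using Min_in[OF fin] by simp
  have m2: "Min ?S \<le> y" if "P y" for y using Min_le[OF fin(1)] that by simp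
  have "Least P = Min ?S"
    by (rule Least_equality) (use m m2 in auto)
  then show ?thesis using m m2 by simp
qed

lemma argmax_prop: "(c::real^'k::{finite,linorder}) $ i \<le> c $ argmax_idx c"
proof -
  have "\<exists>j. \<forall>i. c $ i \<le> c $ j" by (rule argmax_ex)
  then have "\<forall>i. c $ i \<le> c $ (LEAST j. \<forall>i. c $ i \<le> c $ j)" using least_fin[of "\<lambda>j. \<forall>i. c $ i \<le> c $ j"] by blast
  then show ?thesis unfolding argmax_idx_def by blast
qed

lemma argmax_char: "argmax_idx (c::real^'k::{finite,linorder}) = j \<longleftrightarrow> ((\<forall>i. c $ i \<le> c $ j) \<and> (\<forall>l. l < j \<longrightarrow> (\<exists>i. c $ l < c $ i)))"
proof
  assume a: "argmax_idx c = j"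
  have 1: "\<forall>i. c $ i \<le> c $ j" using argmax_prop[of c] a by simp
  have 2: "\<exists>i. c $ l < c $ i" if "l < j" for l
  proof (rule ccontr)
    assume "\<not> ?thesis"
    then have "\<forall>i. c $ i \<le> c $ l" by (simp add: not_less)
    then have "argmax_idx c \<le> l" unfolding argmax_idx_def using least_fin[of "\<lambda>j. \<forall>i. c $ i \<le> c $ j"] by blast
    with a that show False by simp
  qed
  show "(\<forall>i. c $ i \<le> c $ j) \<and> (\<forall>l. l < j \<longrightarrow> (\<exists>i. c $ l < c $ i))" using 1 2 by blast
next
  assume h: "(\<forall>i. c $ i \<le> c $ j) \<and> (\<forall>l. l < j \<longrightarrow> (\<exists>i. c $ l < c $ i))"
  show "argmax_idx c = j" unfolding argmax_idx_def
  proof (rule Least_equality)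
    show "\<forall>i. c $ i \<le> c $ j" using h by blast
    fix y assume "\<forall>i. c $ i \<le> c $ y"
    then show "j \<le> y" using h by (metis leD le_less_linear)
  qed
qed

lemma argmax_meas: "argmax_idx \<in> measurable (borel :: (real^'k::{finite,linorder}) measure) (count_space UNIV)"
proof (subst measurable_count_space_eq2_countable, safe)
  fix j :: "'k::{finite,linorder}"
  have "argmax_idx -` {j} = {c::(real,'k) vec. (\<forall>i. c $ i \<le> c $ j) \<and> (\<forall>l. l < j \<longrightarrow> (\<exists>i. c $ l < c $ i))}"
    using argmax_char[where j=j] by blast
  moreover have "{c::(real,'k) vec. (\<forall>i. c $ i \<le> c $ j) \<and> (\<forall>l. l < j \<longrightarrow> (\<exists>i. c $ l < c $ i))} \<in> sets borel"
    by measurable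
  ultimately show "argmax_idx -` {j} \<inter> space borel \<in> sets (borel :: (real,'k) vec measure)"
    by simp
qed auto

lemma g_meas[measurable]: "(\<lambda>c. onehot (argmax_idx (c::real^'k::{finite,linorder}))) \<in> borel_measurable borel"
  using measurable_comp[OF argmax_meas, of onehot borel] by (auto simp: o_def)

lemma pointwise:
  fixes c :: "real^'k::{finite,linorder}"
  shows "ennreal 0.5 * ennreal (linf_dist (onehot (argmax_idx c)) (onehot i)) \<le> ennreal (linf_dist c (onehot i))"
proof (cases "argmax_idx c = i")
  case True
  then show ?thesis by (simp add: linf_dist_def onehot_def)
next
  case False
  have "linf_dist (onehot (argmax_idx c)) (onehot i) \<le> 1"
    unfolding linf_dist_def onehot_def by (auto intro!: Max.boundedI)
  moreover have "\<bar>c $ i - 1\<bar> \<le> linf_dist c (onehot i)" "\<bar>c $ argmax_idx c - 0\<bar> \<le> linf_dist c (onehot i)"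
    unfolding linf_dist_def onehot_def using False by (auto intro!: Max_ge)
  moreover have "c $ i \<le> c $ argmax_idx c" by (rule argmax_prop)
  ultimately have "0.5 * linf_dist (onehot (argmax_idx c)) (onehot i) \<le> linf_dist c (onehot i)"
    by linarith
  then have "ennreal (0.5 * linf_dist (onehot (argmax_idx c)) (onehot i)) \<le> ennreal (linf_dist c (onehot i))"
    by (rule ennreal_leI)
  moreover have "ennreal 0.5 * ennreal (linf_dist (onehot (argmax_idx c)) (onehot i)) = ennreal (0.5 * linf_dist (onehot (argmax_idx c)) (onehot i))"
    by (rule ennreal_mult[symmetric]) (auto simp: linf_nonneg)
  ultimately show ?thesis by simp
qed


lemma fst_meas: "fst \<in> borel_measurable (borel :: ((real^'k::finite) \<times> (real^'k)) measure)"
  using measurable_fst[of "borel :: (real^'k) measure" "borel :: (real^'k) measure"] by (simp add: borel_prod)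

lemma snd_meas: "snd \<in> borel_measurable (borel :: ((real^'k::finite) \<times> (real^'k)) measure)"
  using measurable_snd[of "borel :: (real^'k) measure" "borel :: (real^'k) measure"] by (simp add: borel_prod)

lemma h_meas: "(\<lambda>z::(real,'k::{finite,linorder}) vec \<times> (real,'k) vec. (onehot (argmax_idx (fst z)), snd z)) \<in> borel_measurable borel"
proof -
  have "(\<lambda>z::(real,'k) vec \<times> (real,'k) vec. (onehot (argmax_idx (fst z)), snd z)) \<in> measurable (borel \<Otimes>\<^sub>M borel) (borel \<Otimes>\<^sub>M borel)"
    by measurable
  then show ?thesis by (simp add: borel_prod)
qed

lemma linf_meas_e: "(\<lambda>z::(real^'k::finite) \<times> (real^'k). ennreal (linf_dist (fst z) (snd z))) \<in> borel_measurable borel"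
  using measurable_compose[OF linf_meas measurable_ennreal] by (simp add: o_def)

theorem mainTheorem3:
  fixes f :: "'x \<Rightarrow> real ^ 'k::{finite,linorder}"
    and P_S P_T :: "('x \<times> 'k) measure"
  assumes "prob_space P_S" and "prob_space P_T"
    and "snd \<in> measurable P_S (count_space UNIV)"
    and "snd \<in> measurable P_T (count_space UNIV)"
    and "fst \<in> measurable P_T X"
    and "f \<in> borel_measurable X"
    and "\<forall>x. f x \<in> prob_simplex"
    and "label_dist P_T = label_dist P_S"
  shows "W_inf (push_conf f P_T) (label_dist P_S)
           \<ge> ennreal 0.5 * W_inf (pseudo_dist f P_T) (label_dist P_T)"
proof -
  let ?g = "\<lambda>c::(real,'k) vec. onehot (argmax_idx c)"
  let ?h = "\<lambda>z::(real,'k) vec \<times> (real,'k) vec. (?g (fst z), snd z)"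
  have fmeas: "(\<lambda>p. f (fst p)) \<in> borel_measurable P_T"
    using measurable_comp[OF assms(5) assms(6)] by (simp add: o_def)
  have ohm: "onehot \<in> measurable (count_space UNIV) (borel :: (real,'k) vec measure)" by simp
  have oh_meas: "(\<lambda>p. onehot (snd p)) \<in> borel_measurable P_T"
    using measurable_comp[OF assms(4) ohm] by (simp add: o_def)
  have R: "- range onehot \<in> sets (borel :: (real,'k) vec measure)"
    by (intro borel_comp borel_closed finite_imp_closed) simp
  have null: "emeasure (label_dist P_T) (- range onehot) = 0"
  proof -
    have "(\<lambda>p. onehot (snd p)) -` (- range onehot) \<inter> space P_T = {}" by auto
    then show ?thesis unfolding label_dist_def using emeasure_distr[OF oh_meas R] by simp
  qed
  show ?thesis unfolding W_inf_def
  proof (rule INF_greatest)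
    fix \<pi> assume "\<pi> \<in> couplings (push_conf f P_T) (label_dist P_S)"
    then have pi: "prob_space \<pi>" and pis: "sets \<pi> = sets borel"
      and pi1: "distr \<pi> borel fst = push_conf f P_T" and pi2: "distr \<pi> borel snd = label_dist P_S"
      unfolding couplings_def by auto
    have hm: "?h \<in> borel_measurable \<pi>" using h_meas measurable_cong_sets[OF pis refl] by blast
    have fm: "fst \<in> borel_measurable \<pi>" using fst_meas measurable_cong_sets[OF pis refl] by blast
    have sm: "snd \<in> borel_measurable \<pi>" using snd_meas measurable_cong_sets[OF pis refl] by blast
    define \<pi>' where "\<pi>' = distr \<pi> borel ?h"
    have "distr \<pi>' borel fst = distr \<pi> borel (fst \<circ> ?h)"
      unfolding \<pi>'_def by (rule distr_distr[OF fst_meas hm])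
    also have "\<dots> = distr \<pi> borel (?g \<circ> fst)" by (simp add: o_def)
    also have "\<dots> = distr (distr \<pi> borel fst) borel ?g" by (rule distr_distr[OF g_meas fm, symmetric])
    also have "\<dots> = distr P_T borel (?g \<circ> (\<lambda>p. f (fst p)))"
      unfolding pi1 push_conf_def by (rule distr_distr[OF g_meas fmeas])
    also have "\<dots> = pseudo_dist f P_T" by (simp add: pseudo_dist_def o_def)
    finally have c1: "distr \<pi>' borel fst = pseudo_dist f P_T" .
    have "distr \<pi>' borel snd = distr \<pi> borel (snd \<circ> ?h)"
      unfolding \<pi>'_def by (rule distr_distr[OF snd_meas hm])
    also have "\<dots> = distr \<pi> borel snd" by (simp add: o_def)
    finally have c2: "distr \<pi>' borel snd = label_dist P_T" using pi2 assms(8) by simp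
    have "\<pi>' \<in> couplings (pseudo_dist f P_T) (label_dist P_T)"
      unfolding couplings_def using c1 c2 prob_space.prob_space_distr[OF pi hm]
      by (simp add: \<pi>'_def)
    then have "(INF \<pi>\<in>couplings (pseudo_dist f P_T) (label_dist P_T). \<integral>\<^sup>+ z. ennreal (linf_dist (fst z) (snd z)) \<partial>\<pi>)
        \<le> \<integral>\<^sup>+ z. ennreal (linf_dist (fst z) (snd z)) \<partial>\<pi>'"
      by (rule INF_lower)
    also have "\<dots> = \<integral>\<^sup>+ z. ennreal (linf_dist (?g (fst z)) (snd z)) \<partial>\<pi>"
      unfolding \<pi>'_def by (subst nn_integral_distr[OF hm]) (simp_all add: linf_meas_e)
    finally have W: "(INF \<pi>\<in>couplings (pseudo_dist f P_T) (label_dist P_T). \<integral>\<^sup>+ z. ennreal (linf_dist (fst z) (snd z)) \<partial>\<pi>)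
        \<le> \<integral>\<^sup>+ z. ennreal (linf_dist (?g (fst z)) (snd z)) \<partial>\<pi>" .
    have im: "(\<lambda>z. ennreal (linf_dist (?g (fst z)) (snd z))) \<in> borel_measurable \<pi>"
      using measurable_comp[OF hm linf_meas_e] by (simp add: o_def)
    have Ns: "snd -` (- range onehot) \<inter> space \<pi> \<in> sets \<pi>"
      using measurable_sets[OF sm R] .
    have "emeasure \<pi> (snd -` (- range onehot) \<inter> space \<pi>) = emeasure (distr \<pi> borel snd) (- range onehot)"
      by (rule emeasure_distr[OF sm R, symmetric])
    also have "\<dots> = 0" using pi2 assms(8) null by simp
    finally have "snd -` (- range onehot) \<inter> space \<pi> \<in> null_sets \<pi>" using Ns by blast
    then have ae: "AE z in \<pi>. snd z \<in> range onehot"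
      by (rule AE_I') auto
    have "ennreal 0.5 * (INF \<pi>\<in>couplings (pseudo_dist f P_T) (label_dist P_T). \<integral>\<^sup>+ z. ennreal (linf_dist (fst z) (snd z)) \<partial>\<pi>)
        \<le> ennreal 0.5 * \<integral>\<^sup>+ z. ennreal (linf_dist (?g (fst z)) (snd z)) \<partial>\<pi>"
      using W by (rule mult_left_mono) simp
    also have "\<dots> = \<integral>\<^sup>+ z. ennreal 0.5 * ennreal (linf_dist (?g (fst z)) (snd z)) \<partial>\<pi>"
      by (rule nn_integral_cmult[OF im, symmetric])
    also have "\<dots> \<le> \<integral>\<^sup>+ z. ennreal (linf_dist (fst z) (snd z)) \<partial>\<pi>"
    proof (rule nn_integral_mono_AE)
      show "AE z in \<pi>. ennreal 0.5 * ennreal (linf_dist (?g (fst z)) (snd z)) \<le> ennreal (linf_dist (fst z) (snd z))"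
        using ae
      proof eventually_elim
        fix z :: "(real,'k) vec \<times> (real,'k) vec" assume "snd z \<in> range onehot"
        then obtain i where i: "snd z = onehot i" by auto
        show "ennreal 0.5 * ennreal (linf_dist (?g (fst z)) (snd z)) \<le> ennreal (linf_dist (fst z) (snd z))"
          unfolding i by (rule pointwise)
      qed
    qed
    finally show "ennreal 0.5 * (INF \<pi>\<in>couplings (pseudo_dist f P_T) (label_dist P_T). \<integral>\<^sup>+ z. ennreal (linf_dist (fst z) (snd z)) \<partial>\<pi>)
        \<le> \<integral>\<^sup>+ z. ennreal (linf_dist (fst z) (snd z)) \<partial>\<pi>" .
  qed
qed

end
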